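(* Let $G$ be a Polish group and let $\varphi\colon G \to [0,\infty]$ be a Baire measurable function which is not meagre (in the sense below). Then $(\varphi \diamond \varphi^{\diamond-1})^\circ(1_G) = 0$.
   Context: For functions $\varphi,\psi\colon G\to[0,\infty]$: $\varphi^{\diamond-1}(x) = \varphi(x^{-1})$ and $(\varphi \diamond \psi)(x) = \inf_{h \in G}\bigl(\varphi(h) + \psi(h^{-1}x)\bigr)$. A function $\varphi\colon G \to [0,\infty]$ is called meagre if there exists $r > 0$ such that $\{x \colon \varphi(x) < r\}$ is a meagre subset of $G$. The interior $\varphi^\circ$ of $\varphi$ is the function $\varphi^\circ(x) = \limsup_{y \to x} \varphi(y)$ (the least upper semi-continuous function which is pointwise $\geq \varphi$). *)

theory Defs
  imports "HOL-Analysis.Analysis"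
begin

text \<open>A Polish group is modelled as a type of class polish_space carrying a
  (not necessarily commutative) group structure, written additively
  (group_add: 0 is the identity, -x the inverse, x + y the product),
  such that multiplication and inversion are continuous.\<close>

definition topological_group_add :: "'a::{topological_space, group_add} itself \<Rightarrow> bool" where
  "topological_group_add _ \<longleftrightarrow>
     continuous_on UNIV (\<lambda>p::'a \<times> 'a. fst p + snd p) \<and> continuous_on UNIV (\<lambda>x::'a. - x)"

definition nowhere_dense :: "'a::topological_space set \<Rightarrow> bool" where
  "nowhere_dense S \<longleftrightarrow> interior (closure S) = {}"

definition meagre :: "'a::topological_space set \<Rightarrow> bool" where
  "meagre S \<longleftrightarrow> (\<exists>\<F>. countable \<F> \<and> (\<forall>T\<in>\<F>. nowhere_dense T) \<and> S = \<Union>\<F>)"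

definition baire_property :: "'a::topological_space set \<Rightarrow> bool" where
  "baire_property S \<longleftrightarrow> (\<exists>U. open U \<and> meagre ((S - U) \<union> (U - S)))"

definition baire_measurable :: "('a::topological_space \<Rightarrow> 'b::topological_space) \<Rightarrow> bool" where
  "baire_measurable f \<longleftrightarrow> (\<forall>V. open V \<longrightarrow> baire_property (f -` V))"

definition meagre_fun :: "('a::topological_space \<Rightarrow> ennreal) \<Rightarrow> bool" where
  "meagre_fun \<phi> \<longleftrightarrow> (\<exists>r>0. meagre {x. \<phi> x < r})"

definition conv_inv :: "('a::group_add \<Rightarrow> ennreal) \<Rightarrow> 'a \<Rightarrow> ennreal" where
  "conv_inv \<phi> x = \<phi> (- x)"

definition inf_conv :: "('a::group_add \<Rightarrow> ennreal) \<Rightarrow> ('a \<Rightarrow> ennreal) \<Rightarrow> 'a \<Rightarrow> ennreal" where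
  "inf_conv \<phi> \<psi> x = (INF h. \<phi> h + \<psi> (- h + x))"

text \<open>Interior: limsup at x (including x itself), i.e. least usc majorant.\<close>
definition usc_interior :: "('a::topological_space \<Rightarrow> ennreal) \<Rightarrow> 'a \<Rightarrow> ennreal" where
  "usc_interior \<phi> x = (INF U\<in>{U. open U \<and> x \<in> U}. SUP y\<in>U. \<phi> y)"

end

theory Submission
  imports Defs
begin

lemma nd_subset: "nowhere_dense T \<Longrightarrow> S \<subseteq> T \<Longrightarrow> nowhere_dense S"
  unfolding nowhere_dense_def
  by (metis closure_mono interior_mono subset_empty)

lemma meagre_subset:
  assumes "meagre M" "S \<subseteq> M" shows "meagre S"
proof -
  obtain F where F: "countable F" "\<forall>T\<in>F. nowhere_dense T" "M = \<Union>F"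
    using assms(1) unfolding meagre_def by blast
  show ?thesis unfolding meagre_def
    apply (rule exI[of _ "(\<lambda>T. T \<inter> S) ` F"])
    using F assms(2) by (auto; meson Int_lower1 nd_subset)
qed

lemma meagre_Un:
  assumes "meagre M" "meagre N" shows "meagre (M \<union> N)"
proof -
  obtain F where F: "countable F" "\<forall>T\<in>F. nowhere_dense T" "M = \<Union>F"
    using assms(1) unfolding meagre_def by blast
  obtain G where G: "countable G" "\<forall>T\<in>G. nowhere_dense T" "N = \<Union>G"
    using assms(2) unfolding meagre_def by blast
  show ?thesis unfolding meagre_def
    apply (rule exI[of _ "F \<union> G"])
    using F G by auto
qed

lemma open_not_meagre:
  fixes U :: "'a::complete_space set"
  assumes "open U" "U \<noteq> {}" shows "\<not> meagre U"
proof
  assume "meagre U"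
  then obtain F where F: "countable F" "\<forall>T\<in>F. nowhere_dense T" "U = \<Union>F"
    unfolding meagre_def by blast
  have "euclidean interior_of \<Union>(closure ` F) = ({}::'a set)"
    apply (rule Baire_category_alt)
    using completely_metrizable_space_euclidean F
    by (auto simp: nowhere_dense_def)
  hence "interior (\<Union>(closure ` F)) = {}" by simp
  moreover have "U \<subseteq> interior (\<Union>(closure ` F))"
    using F(3) assms(1) closure_subset
    by (metis Sup_mono imageI interior_maximal)
  ultimately show False using assms(2) by auto
qed

lemma tr_eq:
  fixes y :: "'a::group_add"
  shows "(+) y ` S = (\<lambda>x. -y + x) -` S"
proof
  show "(+) y ` S \<subseteq> (\<lambda>x. -y + x) -` S" by (auto simp: minus_add_cancel)
  show "(\<lambda>x. -y + x) -` S \<subseteq> (+) y ` S"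
  proof
    fix x assume "x \<in> (\<lambda>x. -y + x) -` S"
    hence "-y + x \<in> S" by simp
    moreover have "x = y + (-y + x)" by (simp add: add.assoc[symmetric])
    ultimately show "x \<in> (+) y ` S" by blast
  qed
qed

lemma cont_left:
  fixes y :: "'a::{topological_space, group_add}"
  assumes "topological_group_add TYPE('a)"
  shows "continuous_on UNIV (\<lambda>x::'a. y + x)"
proof -
  have H: "continuous_on UNIV (\<lambda>p::'a \<times> 'a. fst p + snd p)"
    using assms unfolding topological_group_add_def by blast
  have "continuous_on UNIV (\<lambda>x::'a. (y, x))"
    by (intro continuous_intros)
  from continuous_on_compose2[OF H this] show ?thesis by simp
qed

lemma cont_right:
  fixes u :: "'a::{topological_space, group_add}"
  assumes "topological_group_add TYPE('a)"
  shows "continuous_on UNIV (\<lambda>x::'a. x + u)"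
proof -
  have H: "continuous_on UNIV (\<lambda>p::'a \<times> 'a. fst p + snd p)"
    using assms unfolding topological_group_add_def by blast
  have "continuous_on UNIV (\<lambda>x::'a. (x, u))"
    by (intro continuous_intros)
  from continuous_on_compose2[OF H this] show ?thesis by simp
qed

lemma open_tr:
  fixes y :: "'a::{topological_space, group_add}"
  assumes "topological_group_add TYPE('a)" "open U"
  shows "open ((+) y ` U)"
  unfolding tr_eq
  using continuous_on_open_vimage[of UNIV "\<lambda>x. -y + x"] cont_left[OF assms(1)] assms(2)
  by auto

lemma nd_tr:
  fixes y :: "'a::{topological_space, group_add}"
  assumes tg: "topological_group_add TYPE('a)" and nd: "nowhere_dense T"
  shows "nowhere_dense ((+) y ` T)"
  unfolding nowhere_dense_def
proof (rule ccontr)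
  assume "interior (closure ((+) y ` T)) \<noteq> {}"
  then obtain x where x: "x \<in> interior (closure ((+) y ` T))" by blast
  have c1: "closed ((+) y ` closure T)"
    unfolding tr_eq
    using continuous_on_closed_vimage[of UNIV "\<lambda>x. -y + x"] cont_left[OF tg]
    by simp
  have "closure ((+) y ` T) \<subseteq> (+) y ` closure T"
    by (rule closure_minimal) (use c1 closure_subset in auto)
  hence sub: "interior (closure ((+) y ` T)) \<subseteq> (+) y ` closure T"
    using interior_subset by blast
  define V where "V = (+) (-y) ` interior (closure ((+) y ` T))"
  have "open V" unfolding V_def by (rule open_tr[OF tg]) simp
  moreover have "V \<subseteq> closure T"
    unfolding V_def using sub by (auto simp: minus_add_cancel)
  moreover have "-y + x \<in> V" unfolding V_def using x by blast
  ultimately have "-y + x \<in> interior (closure T)" by (meson interior_maximal subsetD)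
  thus False using nd unfolding nowhere_dense_def by blast
qed

lemma meagre_tr:
  fixes y :: "'a::{topological_space, group_add}"
  assumes tg: "topological_group_add TYPE('a)" and m: "meagre M"
  shows "meagre ((+) y ` M)"
proof -
  obtain F where F: "countable F" "\<forall>T\<in>F. nowhere_dense T" "M = \<Union>F"
    using m unfolding meagre_def by blast
  show ?thesis unfolding meagre_def
    apply (rule exI[of _ "(\<lambda>T. (+) y ` T) ` F"])
    using F nd_tr[OF tg] by auto
qed

theorem lemma3p6:
  fixes \<phi> :: "'a::{polish_space, group_add} \<Rightarrow> ennreal"
  assumes "topological_group_add TYPE('a)"
    and "baire_measurable \<phi>"
    and "\<not> meagre_fun \<phi>"
  shows "usc_interior (inf_conv \<phi> (conv_inv \<phi>)) 0 = 0"
proof -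
  note tg = assms(1)
  have main: "usc_interior (inf_conv \<phi> (conv_inv \<phi>)) 0 \<le> ennreal e" if e: "e > 0" for e :: real
  proof -
    define r where "r = ennreal (e/2)"
    have r0: "r > 0" unfolding r_def using e by simp
    define A where "A = {x. \<phi> x < r}"
    have "A = \<phi> -` {..<r}" unfolding A_def by auto
    hence "baire_property A" using assms(2) unfolding baire_measurable_def by auto
    then obtain U where U: "open U" "meagre ((A - U) \<union> (U - A))"
      unfolding baire_property_def by blast
    have nmA: "\<not> meagre A" using assms(3) r0 unfolding meagre_fun_def A_def by blast
    have "U \<noteq> {}"
    proof
      assume "U = {}"
      with U(2) have "meagre A" by simp
      with nmA show False by simp
    qed
    then obtain u where u: "u \<in> U" by blast
    have UA: "meagre (U - A)" using U(2) meagre_subset by blast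
    define N where "N = (\<lambda>x. x + u) -` U"
    have oN: "open N" unfolding N_def
      using continuous_on_open_vimage[of UNIV "\<lambda>x. x + u"] cont_right[OF tg] U(1) by auto
    have N0: "0 \<in> N" unfolding N_def using u by simp
    have bound: "inf_conv \<phi> (conv_inv \<phi>) y \<le> ennreal e" if y: "y \<in> N" for y
    proof -
      have "\<exists>h. h \<in> A \<and> -y + h \<in> A"
      proof (rule ccontr)
        assume nh: "\<not> (\<exists>h. h \<in> A \<and> -y + h \<in> A)"
        define W where "W = (+) y ` U \<inter> U"
        have oW: "open W" unfolding W_def using open_tr[OF tg U(1)] U(1) by auto
        have "y + u \<in> W" unfolding W_def using y u N_def by auto
        hence Wne: "W \<noteq> {}" by blast
        have "W \<subseteq> (+) y ` (U - A) \<union> (U - A)"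
        proof
          fix w assume w: "w \<in> W"
          show "w \<in> (+) y ` (U - A) \<union> (U - A)"
          proof (cases "w \<in> A")
            case True
            from w obtain v where v: "v \<in> U" "w = y + v" unfolding W_def by blast
            have "-y + w = v" using v(2) by (simp add: minus_add_cancel)
            hence "v \<notin> A" using nh True by metis
            thus ?thesis using v by blast
          next
            case False
            thus ?thesis using w unfolding W_def by blast
          qed
        qed
        moreover have "meagre ((+) y ` (U - A) \<union> (U - A))"
          using meagre_Un[OF meagre_tr[OF tg UA] UA] .
        ultimately have "meagre W" using meagre_subset by blast
        thus False using open_not_meagre[OF oW Wne] by simp
      qed
      then obtain h where h: "h \<in> A" "-y + h \<in> A" by blast
      have eq: "- (- h + y) = -y + h" by (simp add: minus_add)
      have "inf_conv \<phi> (conv_inv \<phi>) y \<le> \<phi> h + conv_inv \<phi> (- h + y)"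
        unfolding inf_conv_def by (rule INF_lower) simp
      also have "\<dots> = \<phi> h + \<phi> (-y + h)" unfolding conv_inv_def eq ..
      also have "\<dots> \<le> r + r" using h unfolding A_def by (intro add_mono) auto
      also have "\<dots> = ennreal e" unfolding r_def using e
        by (simp flip: ennreal_plus)
      finally show ?thesis .
    qed
    have "usc_interior (inf_conv \<phi> (conv_inv \<phi>)) 0 \<le> (SUP y\<in>N. inf_conv \<phi> (conv_inv \<phi>) y)"
      unfolding usc_interior_def by (rule INF_lower) (use oN N0 in simp)
    also have "\<dots> \<le> ennreal e" by (rule SUP_least) (rule bound)
    finally show ?thesis .
  qed
  have "usc_interior (inf_conv \<phi> (conv_inv \<phi>)) 0 \<le> 0"
    by (rule ennreal_le_epsilon) (use main in simp)
  thus ?thesis by simp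
qed

end
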